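(* Let $\zeta$ be a uniform binary substitution that is not primitive. Then for every $y\in X_\zeta$, every $m,\ell\in\mathbb N$ and every $\varepsilon>0$, \[ C_\ell(y^{(m)},\infty,\varepsilon)=\mathrm{RR}_\ell(y^{(m)},\infty,\varepsilon)=\mathrm{DET}_\ell(y^{(m)},\infty,\varepsilon)=1 \quad\text{and}\quad \mathrm{L}_\ell(y^{(m)},\infty,\varepsilon)=\infty . \]
   Context: Alphabet $A=\{0,1\}$, $\Sigma=A^{\mathbb N_0}$ with metric $\rho(y,z)=2^{-\min\{i\ge0:\,y_i\ne z_i\}}$ ($y\ne z$), $\rho(y,y)=0$, shift $\sigma$. A uniform binary substitution is a map $\zeta:A\to A^*$ with $|\zeta(0)|=|\zeta(1)|=q\ge2$, extended to words by concatenation; $\mathcal L_\zeta$ is the set of subwords of words $\zeta^k(a)$, $a\in A,k\ge1$; $X_\zeta=\{y\in\Sigma:y_0\dots y_{n-1}\in\mathcal L_\zeta\ \forall n\}$. $\zeta$ is primitive if for some $k\ge1$ each letter occurs in $\zeta^k(a)$ for every $a$. Recurrence notions for a sequence $z$ (over a finite alphabet, with the analogous metric and shift): recurrence plot $R(z,n,\varepsilon)$, $n\ge2$, is the $n\times n$ matrix ($0\le i,j<n$) with entry $1$ iff $\rho(\sigma^iz,\sigma^jz)\le\varepsilon$. A line of length $\ell$ is $(i,j,\ell)$ with $0\le i,j\le n-\ell$, $i\ne j$, entries $(i+k,j+k)=1$ for $0\le k<\ell$, entry $(i-1,j-1)=0$ if $\min\{i,j\}>0$, entry $(i+\ell,j+\ell)=0$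 if $\max\{i,j\}<n-\ell$. For finite $n$: $N_\ell$ = number of lines of length exactly $\ell$, $\lambda_\ell=N_\ell/(n^2-n)$, $\Lambda_\ell=\sum_{l\ge\ell}\lambda_l$, $\mathrm{RR}_\ell=\sum_{l\ge\ell}l\lambda_l$, $\mathrm{DET}_\ell=\mathrm{RR}_\ell/\mathrm{RR}_1$, $\mathrm{L}_\ell=\mathrm{RR}_\ell/\Lambda_\ell$ (average line length). Correlation sum $C_\ell(z,n,\varepsilon)=n^{-2}\#\{(i,j)\in[0,n)^2:\max_{0\le k<\ell}\rho(\sigma^{i+k}z,\sigma^{j+k}z)\le\varepsilon\}$. Values at $(z,\infty,\varepsilon)$ are the limits as $n\to\infty$ (for $\mathrm{L}_\ell$, the value $\infty$ means the quantity tends to $+\infty$, equivalently $\mathrm{L}_\ell=\ell+C_{\ell+1}/(C_\ell-C_{\ell+1})$ at $n=\infty$ with zero denominator). Embedding: $y^{(m)}$ is the sequence over $A^m$ with $j$-th letter $y_j\dots y_{j+m-1}$. *)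

theory Defs
  imports Complex_Main
begin

text \<open>Alphabet A = {0,1} is encoded as bool (0 = False, 1 = True).
  Sequences are functions nat \<Rightarrow> 'a.\<close>

definition shift :: "nat \<Rightarrow> (nat \<Rightarrow> 'a) \<Rightarrow> (nat \<Rightarrow> 'a)" where
  "shift i z = (\<lambda>k. z (i + k))"

definition rho :: "(nat \<Rightarrow> 'a) \<Rightarrow> (nat \<Rightarrow> 'a) \<Rightarrow> real" where
  "rho y z = (if y = z then 0 else (1/2) ^ (LEAST i. y i \<noteq> z i))"

definition subst_word :: "(bool \<Rightarrow> bool list) \<Rightarrow> bool list \<Rightarrow> bool list" where
  "subst_word \<zeta> w = concat (map \<zeta> w)"

definition is_factor :: "'a list \<Rightarrow> 'a list \<Rightarrow> bool" where
  "is_factor u w \<longleftrightarrow> (\<exists>p s. w = p @ u @ s)"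

definition subst_lang :: "(bool \<Rightarrow> bool list) \<Rightarrow> bool list set" where
  "subst_lang \<zeta> = {u. \<exists>a k. k \<ge> 1 \<and> is_factor u ((subst_word \<zeta> ^^ k) [a])}"

definition subst_shift :: "(bool \<Rightarrow> bool list) \<Rightarrow> (nat \<Rightarrow> bool) set" where
  "subst_shift \<zeta> = {y. \<forall>n. map y [0..<n] \<in> subst_lang \<zeta>}"

definition primitive :: "(bool \<Rightarrow> bool list) \<Rightarrow> bool" where
  "primitive \<zeta> \<longleftrightarrow> (\<exists>k\<ge>1. \<forall>a b. b \<in> set ((subst_word \<zeta> ^^ k) [a]))"

definition embed :: "nat \<Rightarrow> (nat \<Rightarrow> 'a) \<Rightarrow> (nat \<Rightarrow> 'a list)" where
  "embed m y = (\<lambda>j. map (\<lambda>k. y (j + k)) [0..<m])"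

definition rp :: "(nat \<Rightarrow> 'a) \<Rightarrow> real \<Rightarrow> nat \<Rightarrow> nat \<Rightarrow> bool" where
  "rp z \<epsilon> i j \<longleftrightarrow> rho (shift i z) (shift j z) \<le> \<epsilon>"

definition is_line :: "(nat \<Rightarrow> 'a) \<Rightarrow> nat \<Rightarrow> real \<Rightarrow> nat \<Rightarrow> nat \<Rightarrow> nat \<Rightarrow> bool" where
  "is_line z n \<epsilon> i j l \<longleftrightarrow>
     l \<le> n \<and> i \<le> n - l \<and> j \<le> n - l \<and> i \<noteq> j \<and>
     (\<forall>k<l. rp z \<epsilon> (i + k) (j + k)) \<and>
     (min i j > 0 \<longrightarrow> \<not> rp z \<epsilon> (i - 1) (j - 1)) \<and>
     (max i j < n - l \<longrightarrow> \<not> rp z \<epsilon> (i + l) (j + l))"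

definition num_lines :: "(nat \<Rightarrow> 'a) \<Rightarrow> nat \<Rightarrow> real \<Rightarrow> nat \<Rightarrow> nat" where
  "num_lines z n \<epsilon> l = card {(i, j). i < n \<and> j < n \<and> is_line z n \<epsilon> i j l}"

definition lam :: "(nat \<Rightarrow> 'a) \<Rightarrow> nat \<Rightarrow> real \<Rightarrow> nat \<Rightarrow> real" where
  "lam z n \<epsilon> l = real (num_lines z n \<epsilon> l) / (real n ^ 2 - real n)"

text \<open>Lines have length at most n, so sums over l \<ge> ell are sums over ell..n.\<close>

definition Lam :: "(nat \<Rightarrow> 'a) \<Rightarrow> nat \<Rightarrow> real \<Rightarrow> nat \<Rightarrow> real" where
  "Lam z n \<epsilon> ell = (\<Sum>l\<in>{ell..n}. lam z n \<epsilon> l)"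

definition RR :: "(nat \<Rightarrow> 'a) \<Rightarrow> nat \<Rightarrow> real \<Rightarrow> nat \<Rightarrow> real" where
  "RR z n \<epsilon> ell = (\<Sum>l\<in>{ell..n}. real l * lam z n \<epsilon> l)"

definition DET :: "(nat \<Rightarrow> 'a) \<Rightarrow> nat \<Rightarrow> real \<Rightarrow> nat \<Rightarrow> real" where
  "DET z n \<epsilon> ell = RR z n \<epsilon> ell / RR z n \<epsilon> 1"

definition avgL :: "(nat \<Rightarrow> 'a) \<Rightarrow> nat \<Rightarrow> real \<Rightarrow> nat \<Rightarrow> real" where
  "avgL z n \<epsilon> ell = RR z n \<epsilon> ell / Lam z n \<epsilon> ell"

definition corr_sum :: "(nat \<Rightarrow> 'a) \<Rightarrow> nat \<Rightarrow> real \<Rightarrow> nat \<Rightarrow> real" where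
  "corr_sum z n \<epsilon> ell = real (card {(i, j). i < n \<and> j < n \<and>
      (\<forall>k<ell. rho (shift (i + k) z) (shift (j + k) z) \<le> \<epsilon>)}) / real n ^ 2"

end

theory Submission
  imports Defs
begin


lemma line_unique:
  assumes "is_line z n e i j l" "is_line z n e i j l'" shows "l = l'"
proof (rule ccontr)
  assume "l \<noteq> l'"
  then consider "l < l'" | "l' < l" by linarith
  then show False
  proof cases
    case 1
    with assms show False unfolding is_line_def
      by (metis (no_types, lifting) diff_less_mono2 le_less_trans less_le_trans max_less_iff_conj)
  next
    case 2
    with assms show False unfolding is_line_def
      by (metis (no_types, lifting) diff_less_mono2 le_less_trans less_le_trans max_less_iff_conj)
  qed
qed

lemma line_disj_aux:
  assumes "is_line z n e i j l" "is_line z n e i' j' l'" "k < l" "k' < l'"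
    "i + k = i' + k'" "j + k = j' + k'" "i < i'"
  shows False
proof -
  have "i' > 0" "j' > 0" using assms by auto
  hence nr: "\<not> rp z e (i' - 1) (j' - 1)" using assms(2) unfolding is_line_def by auto
  define t where "t = i' - 1 - i"
  have "t < l" using assms unfolding t_def by linarith
  hence "rp z e (i + t) (j + t)" using assms(1) unfolding is_line_def by auto
  moreover have "i + t = i' - 1" "j + t = j' - 1" using assms unfolding t_def by linarith+
  ultimately show False using nr by simp
qed

lemma line_disj:
  assumes "is_line z n e i j l" "is_line z n e i' j' l'" "k < l" "k' < l'"
    "i + k = i' + k'" "j + k = j' + k'"
  shows "i = i' \<and> j = j' \<and> l = l' \<and> k = k'"
proof -
  have "i = i'"
  proof (rule ccontr)
    assume "i \<noteq> i'"
    then consider "i < i'" | "i' < i" by linarith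
    then show False
    proof cases
      case 1 then show ?thesis using line_disj_aux[OF assms] by blast
    next
      case 2 then show ?thesis using line_disj_aux[OF assms(2,1,4,3)] assms(5,6) by simp
    qed
  qed
  then show ?thesis using assms line_unique by auto
qed

definition Lset where "Lset z n e l = {(i, j). i < n \<and> j < n \<and> is_line z n e i j l}"

lemma finite_Lset[simp]: "finite (Lset z n e l)"
  by (rule finite_subset[of _ "{..<n} \<times> {..<n}"]) (auto simp: Lset_def)

lemma RR_count_upper:
  "(\<Sum>l\<in>{ell..n}. l * card (Lset z n e l)) \<le> n * n - n"
proof -
  define S where "S = (SIGMA l:{ell..n}. Lset z n e l \<times> {..<l})"
  have fS: "finite S" unfolding S_def by auto
  have cS: "card S = (\<Sum>l\<in>{ell..n}. l * card (Lset z n e l))"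
    unfolding S_def by (subst card_SigmaI) (auto simp: card_cartesian_product mult.commute)
  define f where "f = (\<lambda>(l::nat, (i::nat, j::nat), k::nat). (i + k, j + k))"
  define T where "T = {..<n} \<times> {..<n} - (\<lambda>p. (p, p)) ` {..<n}"
  have "inj_on f S"
  proof (rule inj_onI)
    fix a b assume "a \<in> S" "b \<in> S" "f a = f b"
    then show "a = b" unfolding S_def f_def Lset_def
      by clarsimp (metis line_disj)
  qed
  moreover have "f ` S \<subseteq> T"
    unfolding S_def f_def T_def Lset_def is_line_def by auto
  ultimately have "card S \<le> card T"
    by (metis card_image card_mono finite_Diff finite_SigmaI finite_lessThan T_def)
  moreover have "card T = n * n - n"
    unfolding T_def by (subst card_Diff_subset) (auto simp: card_image inj_on_def)
  ultimately show ?thesis using cS by simp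
qed



lemma line_through:
  assumes "p \<noteq> r" "p + ell \<le> n" "r + ell \<le> n" "ell \<ge> 1"
    "\<forall>k<ell. rp z e (p + k) (r + k)"
  shows "\<exists>l i j k. ell \<le> l \<and> l \<le> n \<and> i < n \<and> j < n \<and> is_line z n e i j l \<and> k < l
        \<and> i + k = p \<and> j + k = r"
proof -
  define S where "S = {s. s \<le> min p r \<and> (\<forall>s'\<le>s. rp z e (p - s') (r - s'))}"
  define E where "E = {x. p + x \<le> n \<and> r + x \<le> n \<and> (\<forall>k<x. rp z e (p + k) (r + k))}"
  have fS: "finite S" unfolding S_def by auto
  have fE: "finite E" unfolding E_def by (rule finite_subset[of _ "{..n}"]) auto
  have "0 \<in> S" unfolding S_def using assms(4,5) by (auto dest: spec[of _ 0])
  have "ell \<in> E" unfolding E_def using assms by auto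
  define s0 where "s0 = Max S"
  define e0 where "e0 = Max E"
  have s0S: "s0 \<in> S" unfolding s0_def using fS \<open>0 \<in> S\<close> Max_in by blast
  have e0E: "e0 \<in> E" unfolding e0_def using fE \<open>ell \<in> E\<close> Max_in by blast
  have "ell \<le> e0" unfolding e0_def using fE \<open>ell \<in> E\<close> by simp
  have s0max: "s0 + 1 \<notin> S"
  proof
    assume "s0 + 1 \<in> S" then have "s0 + 1 \<le> s0" unfolding s0_def using fS by simp
    then show False by simp
  qed
  have e0max: "e0 + 1 \<notin> E"
  proof
    assume "e0 + 1 \<in> E" then have "e0 + 1 \<le> e0" unfolding e0_def using fE by simp
    then show False by simp
  qed
  define i where "i = p - s0"
  define j where "j = r - s0"
  define l where "l = s0 + e0"
  have s0le: "s0 \<le> p" "s0 \<le> r" using s0S unfolding S_def by auto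
  have pe: "p + e0 \<le> n" "r + e0 \<le> n" using e0E unfolding E_def by auto
  have line: "is_line z n e i j l"
    unfolding is_line_def
  proof (intro conjI allI impI)
    show "l \<le> n" "i \<le> n - l" "j \<le> n - l" "i \<noteq> j"
      using s0le pe assms(1) unfolding i_def j_def l_def by auto
  next
    fix k assume "k < l"
    show "rp z e (i + k) (j + k)"
    proof (cases "k \<le> s0")
      case True
      have all: "\<forall>s'\<le>s0. rp z e (p - s') (r - s')" using s0S unfolding S_def by simp
      have "rp z e (p - (s0 - k)) (r - (s0 - k))" using all[rule_format, of "s0 - k"] by simp
      moreover have "i + k = p - (s0 - k)" "j + k = r - (s0 - k)"
        unfolding i_def j_def using True s0le by arith+
      ultimately show ?thesis by simp
    next
      case False
      have all: "\<forall>k<e0. rp z e (p + k) (r + k)" using e0E unfolding E_def by simp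
      have "rp z e (p + (k - s0)) (r + (k - s0))" using all[rule_format, of "k - s0"] False \<open>k < l\<close>
        unfolding l_def by simp
      moreover have "i + k = p + (k - s0)" "j + k = r + (k - s0)"
        unfolding i_def j_def using False s0le by arith+
      ultimately show ?thesis by simp
    qed
  next
    assume "0 < min i j"
    show "\<not> rp z e (i - 1) (j - 1)"
    proof
      assume h: "rp z e (i - 1) (j - 1)"
      have "s0 + 1 \<in> S" unfolding S_def
      proof (intro CollectI conjI allI impI)
        show "s0 + 1 \<le> min p r" using \<open>0 < min i j\<close> unfolding i_def j_def by auto
      next
        fix s' assume "s' \<le> s0 + 1"
        then consider "s' \<le> s0" | "s' = s0 + 1" by linarith
        then show "rp z e (p - s') (r - s')"
        proof cases
          case 1 then show ?thesis using s0S unfolding S_def by auto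
        next
          case 2 then show ?thesis using h unfolding i_def j_def by simp
        qed
      qed
      then show False using s0max by simp
    qed
  next
    assume "max i j < n - l"
    show "\<not> rp z e (i + l) (j + l)"
    proof
      assume h: "rp z e (i + l) (j + l)"
      have "e0 + 1 \<in> E" unfolding E_def
      proof (intro CollectI conjI allI impI)
        show "p + (e0 + 1) \<le> n" "r + (e0 + 1) \<le> n"
          using \<open>max i j < n - l\<close> s0le pe unfolding i_def j_def l_def by auto
      next
        fix k assume "k < e0 + 1"
        then consider "k < e0" | "k = e0" by linarith
        then show "rp z e (p + k) (r + k)"
        proof cases
          case 1 then show ?thesis using e0E unfolding E_def by auto
        next
          case 2 then show ?thesis using h s0le unfolding i_def j_def l_def by simp
        qed
      qed
      then show False using e0max by simp
    qed
  qed
  show ?thesis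
  proof (intro exI conjI)
    show "ell \<le> l" "l \<le> n" using \<open>ell \<le> e0\<close> pe s0le unfolding l_def by auto
    show "i < n" "j < n" using \<open>ell \<le> e0\<close> assms(4) pe s0le unfolding i_def j_def by auto
    show "is_line z n e i j l" by (rule line)
    show "s0 < l" using \<open>ell \<le> e0\<close> assms(4) unfolding l_def by auto
    show "i + s0 = p" "j + s0 = r" using s0le unfolding i_def j_def by auto
  qed
qed

lemma RR_count_lower:
  assumes "ell \<ge> 1"
  shows "card {(p, r). p \<noteq> r \<and> p + ell \<le> n \<and> r + ell \<le> n \<and> (\<forall>k<ell. rp z e (p + k) (r + k))}
     \<le> (\<Sum>l\<in>{ell..n}. l * card (Lset z n e l))"
proof -
  define S where "S = (SIGMA l:{ell..n}. Lset z n e l \<times> {..<l})"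
  have fS: "finite S" unfolding S_def by auto
  have cS: "card S = (\<Sum>l\<in>{ell..n}. l * card (Lset z n e l))"
    unfolding S_def by (subst card_SigmaI) (auto simp: card_cartesian_product mult.commute)
  define f where "f = (\<lambda>(l::nat, (i::nat, j::nat), k::nat). (i + k, j + k))"
  have "{(p, r). p \<noteq> r \<and> p + ell \<le> n \<and> r + ell \<le> n \<and> (\<forall>k<ell. rp z e (p + k) (r + k))} \<subseteq> f ` S"
  proof clarify
    fix p r assume h: "p \<noteq> r" "p + ell \<le> n" "r + ell \<le> n" "\<forall>k<ell. rp z e (p + k) (r + k)"
    obtain l i j k where *: "ell \<le> l \<and> l \<le> n \<and> i < n \<and> j < n \<and> is_line z n e i j l \<and> k < l
        \<and> i + k = p \<and> j + k = r" using line_through[OF h(1-3) assms h(4)] by blast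
    then have "(l, (i, j), k) \<in> S" unfolding S_def Lset_def by auto
    moreover have "f (l, (i, j), k) = (p, r)" unfolding f_def using * by auto
    ultimately show "(p, r) \<in> f ` S" by force
  qed
  then have "card {(p, r). p \<noteq> r \<and> p + ell \<le> n \<and> r + ell \<le> n \<and> (\<forall>k<ell. rp z e (p + k) (r + k))} \<le> card (f ` S)"
    using fS by (intro card_mono) auto
  also have "\<dots> \<le> card S" using fS card_image_le by blast
  finally show ?thesis using cS by simp
qed

lemma Lam_count_upper:
  "(\<Sum>l\<in>{ell..n}. card (Lset z n e l))
     \<le> card {(i, j). i < n \<and> j < n \<and> (min i j = 0 \<or> \<not> rp z e (i - 1) (j - 1))}"
proof -
  define S where "S = (SIGMA l:{ell..n}. Lset z n e l)"
  have fS: "finite S" unfolding S_def by auto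
  have cS: "card S = (\<Sum>l\<in>{ell..n}. card (Lset z n e l))"
    unfolding S_def by (subst card_SigmaI) auto
  have "inj_on snd S"
    unfolding S_def Lset_def inj_on_def by (auto intro: line_unique)
  moreover have "snd ` S \<subseteq> {(i, j). i < n \<and> j < n \<and> (min i j = 0 \<or> \<not> rp z e (i - 1) (j - 1))}"
    unfolding S_def Lset_def is_line_def by auto
  moreover have "finite {(i, j). i < n \<and> j < n \<and> (min i j = 0 \<or> \<not> rp z e (i - 1) (j - 1))}"
    by (rule finite_subset[of _ "{..<n}\<times>{..<n}"]) auto
  ultimately have "card S \<le> card {(i, j). i < n \<and> j < n \<and> (min i j = 0 \<or> \<not> rp z e (i - 1) (j - 1))}"
    using card_inj_on_le by blast
  then show ?thesis using cS by simp
qed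



lemma rho_le:
  assumes "\<forall>t<N. u t = v t" "(1/2::real)^N \<le> e"
  shows "rho u v \<le> e"
proof (cases "u = v")
  case True
  have "(0::real) \<le> (1/2)^N" by simp
  then show ?thesis using True order_trans[OF _ assms(2)] unfolding rho_def by simp
next
  case False
  then obtain i where "u i \<noteq> v i" by auto
  then have L: "u (LEAST i. u i \<noteq> v i) \<noteq> v (LEAST i. u i \<noteq> v i)" by (rule LeastI)
  have "N \<le> (LEAST i. u i \<noteq> v i)"
  proof (rule ccontr)
    assume "\<not> ?thesis"
    then show False using assms(1) L by auto
  qed
  then have "(1/2::real) ^ (LEAST i. u i \<noteq> v i) \<le> (1/2)^N"
    by (intro power_decreasing) auto
  then show ?thesis using False order_trans[OF _ assms(2)] unfolding rho_def by simp
qed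

lemma rp_good:
  assumes "(1/2::real)^N \<le> e" "\<forall>k<W. y (p + k) = c" "\<forall>k<W. y (r + k) = c"
    "ell + N + m \<le> W" "k < ell"
  shows "rp (embed m y) e (p + k) (r + k)"
  unfolding rp_def
proof (rule rho_le[OF _ assms(1)], intro allI impI)
  fix t assume "t < N"
  have "y (p + k + t + s) = y (r + k + t + s)" if "s < m" for s
  proof -
    have "k + t + s < W" using assms(4,5) \<open>t < N\<close> that by linarith
    then show ?thesis using assms(2,3) by (metis add.assoc)
  qed
  then show "shift (p + k) (embed m y) t = shift (r + k) (embed m y) t"
    unfolding shift_def embed_def by (auto simp: add.assoc)
qed

lemma RR_eq: "RR z n e ell = real (\<Sum>l\<in>{ell..n}. l * card (Lset z n e l)) / (real n ^ 2 - real n)"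
  unfolding RR_def lam_def num_lines_def Lset_def
  by (simp add: sum_divide_distrib)

lemma Lam_eq: "Lam z n e ell = real (\<Sum>l\<in>{ell..n}. card (Lset z n e l)) / (real n ^ 2 - real n)"
  unfolding Lam_def lam_def num_lines_def Lset_def
  by (simp add: sum_divide_distrib)

lemma Dpos: "n \<ge> 2 \<Longrightarrow> real n ^ 2 - real n > 0"
proof -
  assume "n \<ge> 2"
  then have "real n * 1 < real n * real n" by (intro mult_strict_left_mono) auto
  then show ?thesis by (simp add: power2_eq_square)
qed

lemma Dnat: "real (n * n - n) = real n ^ 2 - real n"
  by (simp add: of_nat_diff power2_eq_square)

lemma RR_le1: "n \<ge> 2 \<Longrightarrow> RR z n e ell \<le> 1"
proof -
  assume n: "n \<ge> 2"
  have "real (\<Sum>l\<in>{ell..n}. l * card (Lset z n e l)) \<le> real (n * n - n)"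
    using RR_count_upper[where ell=ell and n=n and z=z and e=e] by (simp only: of_nat_le_iff)
  then have "real (\<Sum>l\<in>{ell..n}. l * card (Lset z n e l)) \<le> real n ^ 2 - real n"
    by (simp only: Dnat)
  then show ?thesis unfolding RR_eq using Dpos[OF n] by (simp only: divide_le_eq_1) simp
qed

lemma Dnonneg: "real n ^ 2 - real n \<ge> 0"
proof -
  have "real n \<le> real n ^ 2" by (cases n) (auto simp: power2_eq_square)
  then show ?thesis by simp
qed

lemma RR_ge0: "RR z n e ell \<ge> 0"
  unfolding RR_eq using Dnonneg[of n] by (intro divide_nonneg_nonneg of_nat_0_le_iff) auto

lemma Lam_RR: "n \<ge> 2 \<Longrightarrow> RR z n e ell \<le> real n * Lam z n e ell"
proof -
  assume n: "n \<ge> 2"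
  have "(\<Sum>l\<in>{ell..n}. l * card (Lset z n e l)) \<le> (\<Sum>l\<in>{ell..n}. n * card (Lset z n e l))"
    by (intro sum_mono) auto
  also have "\<dots> = n * (\<Sum>l\<in>{ell..n}. card (Lset z n e l))" by (simp add: sum_distrib_left)
  finally have "real (\<Sum>l\<in>{ell..n}. l * card (Lset z n e l)) \<le> real n * real (\<Sum>l\<in>{ell..n}. card (Lset z n e l))"
    by (simp only: of_nat_le_iff flip: of_nat_mult)
  then have "real (\<Sum>l\<in>{ell..n}. l * card (Lset z n e l)) / (real n ^ 2 - real n)
     \<le> real n * real (\<Sum>l\<in>{ell..n}. card (Lset z n e l)) / (real n ^ 2 - real n)"
    using Dpos[OF n] by (rule divide_right_mono[OF _ less_imp_le])
  then show ?thesis unfolding RR_eq Lam_eq by (simp only: times_divide_eq_right)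
qed



lemma corr_bounds:
  fixes y :: "nat \<Rightarrow> 'a"
  assumes "(1/2::real)^N \<le> e" "ell + N + m \<le> W" "n > 0"
  shows "corr_sum (embed m y) n e ell \<le> 1"
    "corr_sum (embed m y) n e ell \<ge> (real (card {i. i < n \<and> (\<forall>k<W. y (i + k) = c)}) / real n)^2"
proof -
  define C where "C = {(i, j). i < n \<and> j < n \<and>
      (\<forall>k<ell. rho (shift (i + k) (embed m y)) (shift (j + k) (embed m y)) \<le> e)}"
  define G where "G = {i. i < n \<and> (\<forall>k<W. y (i + k) = c)}"
  have CS: "C \<subseteq> {..<n} \<times> {..<n}" unfolding C_def by auto
  have fC: "finite C" using CS finite_subset by blast
  have "card C \<le> card ({..<n} \<times> {..<n})" using CS by (intro card_mono) auto
  then have "card C \<le> n * n" by (simp add: card_cartesian_product)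
  then have "real (card C) \<le> real n ^ 2" by (metis of_nat_le_iff of_nat_mult power2_eq_square)
  then show "corr_sum (embed m y) n e ell \<le> 1" unfolding corr_sum_def C_def[symmetric]
    using assms(3) by simp
  have "G \<times> G \<subseteq> C" unfolding G_def C_def
    using rp_good[OF assms(1) _ _ assms(2)] unfolding rp_def by auto
  then have "card (G \<times> G) \<le> card C" using fC by (intro card_mono) auto
  then have "card G * card G \<le> card C" by (simp add: card_cartesian_product)
  then have "real (card G) ^ 2 \<le> real (card C)" by (metis of_nat_le_iff of_nat_mult power2_eq_square)
  then show "corr_sum (embed m y) n e ell \<ge> (real (card G) / real n)^2"
    unfolding corr_sum_def C_def[symmetric] using assms(3)
    by (simp add: power_divide divide_right_mono)
qed

lemma card_good_bad:
  "card {i. i < n \<and> P i} + card {i. i < n \<and> \<not> P i} = n"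
proof -
  have "{i. i < n \<and> P i} \<union> {i. i < n \<and> \<not> P i} = {..<n}" by auto
  moreover have "card ({i. i < n \<and> P i} \<union> {i. i < n \<and> \<not> P i}) =
      card {i. i < n \<and> P i} + card {i. i < n \<and> \<not> P i}"
    by (intro card_Un_disjoint) auto
  ultimately show ?thesis by simp
qed

lemma RR_lower_good:
  fixes y :: "nat \<Rightarrow> 'a" and c :: 'a and W n :: nat
  assumes "(1/2::real)^N \<le> e" "ell + N + m \<le> W" "n \<ge> 2" "ell \<ge> 1"
  defines "B \<equiv> card {i. i < n \<and> \<not> (\<forall>k<W. y (i + k) = c)}"
  shows "RR (embed m y) n e ell \<ge> (max 0 (1 - real ell / real n - real B / real n))^2 - 1 / real n"
proof -
  define z where "z = embed m y"
  define good where "good i = (\<forall>k<W. y (i + k) = c)" for i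
  define Bad where "Bad = {i. i < n \<and> \<not> good i}"
  define G where "G = {p. p + ell \<le> n \<and> good p}"
  define T where "T = {(p, r). p \<noteq> r \<and> p + ell \<le> n \<and> r + ell \<le> n \<and> (\<forall>k<ell. rp z e (p + k) (r + k))}"
  define g where "g = card G"
  have B: "B = card Bad" unfolding B_def Bad_def good_def by simp
  have GS: "G \<subseteq> {..<n}" unfolding G_def using assms(4) by auto
  have fG: "finite G" using GS finite_subset by blast
  have gn: "g \<le> n" unfolding g_def using card_mono[OF _ GS] by simp
  have "{..<n - ell} \<subseteq> G \<union> Bad" unfolding G_def Bad_def by auto
  then have "n - ell \<le> card (G \<union> Bad)" by (metis card_lessThan card_mono finite_Un fG finite_subset
        GS Bad_def finite_lessThan mem_Collect_eq subsetI lessThan_iff)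
  also have "\<dots> \<le> g + B" unfolding g_def B using card_Un_le by blast
  finally have gB: "n - ell \<le> g + B" .
  have TS: "T \<subseteq> {..<n} \<times> {..<n}" unfolding T_def using assms(4) by auto
  have fT: "finite T" using TS finite_subset by blast
  have "G \<times> G - (\<lambda>p. (p, p)) ` G \<subseteq> T"
    unfolding G_def T_def z_def good_def using rp_good[OF assms(1) _ _ assms(2)] by auto
  then have "card (G \<times> G - (\<lambda>p. (p, p)) ` G) \<le> card T" using fT by (intro card_mono) auto
  moreover have "card (G \<times> G - (\<lambda>p. (p, p)) ` G) = g * g - g"
    unfolding g_def using fG by (subst card_Diff_subset) (auto simp: card_image inj_on_def card_cartesian_product)
  ultimately have cT: "g * g - g \<le> card T" by simp
  have "card T \<le> (\<Sum>l\<in>{ell..n}. l * card (Lset z n e l))"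
    unfolding T_def by (rule RR_count_lower[OF assms(4)])
  then have "real (card T) \<le> real (\<Sum>l\<in>{ell..n}. l * card (Lset z n e l))"
    by (simp only: of_nat_le_iff)
  then have RRT: "RR z n e ell \<ge> real (card T) / (real n ^ 2 - real n)"
    unfolding RR_eq using Dpos[OF assms(3)] by (rule divide_right_mono[OF _ less_imp_le])
  define X where "X = real (card T)"
  have X0: "X \<ge> 0" unfolding X_def by simp
  have Xg: "X \<ge> real g ^ 2 - real n"
  proof -
    have "g \<le> g * g" by (cases g) auto
    then have "real (g * g - g) = real g ^ 2 - real g" by (simp add: of_nat_diff power2_eq_square)
    moreover have "real (g * g - g) \<le> X" unfolding X_def using cT by (simp only: of_nat_le_iff)
    ultimately show ?thesis using gn by simp
  qed
  have D: "0 < real n ^ 2 - real n" "real n ^ 2 - real n \<le> real n ^ 2"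
    using Dpos[OF assms(3)] by auto
  have n0: "real n > 0" using assms(3) by simp
  have step1: "X / (real n ^ 2 - real n) \<ge> (real g ^ 2 - real n) / real n ^ 2"
  proof (cases "real g ^ 2 - real n \<le> 0")
    case True
    then have "(real g ^ 2 - real n) / real n ^ 2 \<le> 0" using n0 by (simp add: divide_nonpos_pos)
    also have "0 \<le> X / (real n ^ 2 - real n)" using X0 D by simp
    finally show ?thesis .
  next
    case False
    have "(real g ^ 2 - real n) / real n ^ 2 \<le> X / real n ^ 2" using Xg n0 by (simp add: divide_right_mono)
    also have "\<dots> \<le> X / (real n ^ 2 - real n)" using X0 D n0 by (intro divide_left_mono) (auto intro!: mult_pos_pos)
    finally show ?thesis .
  qed
  have "(real g ^ 2 - real n) / real n ^ 2 = (real g / real n)^2 - 1 / real n"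
    using n0 by (simp add: field_simps power2_eq_square)
  moreover have "max 0 (1 - real ell / real n - real B / real n) \<le> real g / real n"
  proof -
    have "real n - real ell \<le> real g + real B" using gB by linarith
    have "1 - real ell / real n - real B / real n = (real n - real ell - real B) / real n"
      using n0 by (simp add: diff_divide_distrib)
    also have "\<dots> \<le> real g / real n" using n0 \<open>real n - real ell \<le> real g + real B\<close>
      by (intro divide_right_mono) auto
    finally have "1 - real ell / real n - real B / real n \<le> real g / real n" .
    then show ?thesis by simp
  qed
  then have "(max 0 (1 - real ell / real n - real B / real n))^2 \<le> (real g / real n)^2"
    by (intro power_mono) auto
  ultimately show ?thesis using RRT step1 unfolding X_def z_def by linarith
qed



lemma Lam_upper_good:
  fixes y :: "nat \<Rightarrow> 'a" and c :: 'a and W n :: nat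
  assumes "(1/2::real)^N \<le> e" "ell + N + m \<le> W" "n \<ge> 2" "ell \<ge> 1"
  defines "B \<equiv> card {i. i < n \<and> \<not> (\<forall>k<W. y (i + k) = c)}"
  shows "Lam (embed m y) n e ell \<le> 4 / real n + 4 * real B / real n"
proof -
  define z where "z = embed m y"
  define Bad where "Bad = {i. i < n \<and> \<not> (\<forall>k<W. y (i + k) = c)}"
  define LT where "LT = {(i, j). i < n \<and> j < n \<and> (min i j = 0 \<or> \<not> rp z e (i - 1) (j - 1))}"
  have fB: "finite Bad" unfolding Bad_def by auto
  have W1: "1 + N + m \<le> W" using assms(2,4) by linarith
  have "LT \<subseteq> ({0} \<times> {..<n} \<union> {..<n} \<times> {0}) \<union> (Suc ` Bad \<times> {..<n} \<union> {..<n} \<times> Suc ` Bad)"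
  proof (rule subsetI)
    fix x assume hx: "x \<in> LT"
    obtain i j where x: "x = (i, j)" by (cases x)
    have h: "(i, j) \<in> LT" using hx x by simp
    have ij: "i < n" "j < n" using h unfolding LT_def by auto
    show "x \<in> ({0} \<times> {..<n} \<union> {..<n} \<times> {0}) \<union> (Suc ` Bad \<times> {..<n} \<union> {..<n} \<times> Suc ` Bad)"
    proof (rule ccontr)
      assume nn: "\<not> ?thesis"
      then have pos: "i > 0" "j > 0" using ij x by auto
      have "i - 1 \<notin> Bad" using nn x ij pos by (metis Suc_pred' image_eqI lessThan_iff mem_Sigma_iff UnCI)
      then have gi: "\<forall>k<W. y (i - 1 + k) = c" unfolding Bad_def using ij by auto
      have "j - 1 \<notin> Bad" using nn x ij pos by (metis Suc_pred' image_eqI lessThan_iff mem_Sigma_iff UnCI)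
      then have gj: "\<forall>k<W. y (j - 1 + k) = c" unfolding Bad_def using ij by auto
      have "rp z e (i - 1 + 0) (j - 1 + 0)" unfolding z_def
        by (rule rp_good[OF assms(1) gi gj W1]) simp
      then show False using h pos unfolding LT_def by auto
    qed
  qed
  then have "card LT \<le> card (({0} \<times> {..<n} \<union> {..<n} \<times> {0}) \<union> (Suc ` Bad \<times> {..<n} \<union> {..<n} \<times> Suc ` Bad))"
    using fB by (intro card_mono) auto
  also have "\<dots> \<le> card ({0} \<times> {..<n} \<union> {..<n} \<times> {0}) + card (Suc ` Bad \<times> {..<n} \<union> {..<n} \<times> Suc ` Bad)"
    by (rule card_Un_le)
  also have "\<dots> \<le> (card ({0::nat} \<times> {..<n}) + card ({..<n} \<times> {0::nat})) +
      (card (Suc ` Bad \<times> {..<n}) + card ({..<n} \<times> Suc ` Bad))"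
    by (intro add_mono) (rule card_Un_le)+
  also have "\<dots> \<le> (n + n) + (B * n + n * B)"
    using card_image_le[OF fB, of Suc] unfolding B_def Bad_def[symmetric]
    by (simp add: card_cartesian_product card_image)
  finally have cLT: "card LT \<le> 2 * n + 2 * n * B" by (simp add: algebra_simps)
  have "(\<Sum>l\<in>{ell..n}. card (Lset z n e l)) \<le> card LT"
    unfolding LT_def by (rule Lam_count_upper)
  with cLT have "real (\<Sum>l\<in>{ell..n}. card (Lset z n e l)) \<le> real (2 * n + 2 * n * B)"
    by (simp only: of_nat_le_iff)
  then have L1: "Lam z n e ell \<le> (2 * real n + 2 * real n * real B) / (real n ^ 2 - real n)"
    unfolding Lam_eq using Dpos[OF assms(3)] by (simp add: divide_right_mono)
  have D: "0 < real n ^ 2 - real n" using Dpos[OF assms(3)] .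
  have n2: "real n \<ge> 2" using assms(3) by simp
  have "(2 * real n + 2 * real n * real B) \<le> (4 / real n + 4 * real B / real n) * (real n ^ 2 - real n)"
  proof -
    have "(4 / real n + 4 * real B / real n) * (real n ^ 2 - real n) = (4 + 4 * real B) * (real n - 1)"
      using n2 by (simp add: field_simps power2_eq_square)
    moreover have "2 * real n * (1 + real B) \<le> 4 * (real n - 1) * (1 + real B)"
      using n2 by (intro mult_right_mono) auto
    ultimately show ?thesis by (simp add: algebra_simps)
  qed
  then have "(2 * real n + 2 * real n * real B) / (real n ^ 2 - real n) \<le> 4 / real n + 4 * real B / real n"
    using D by (simp add: pos_divide_le_eq)
  with L1 show ?thesis unfolding z_def by linarith
qed



lemma RR_tendsto:
  fixes y :: "nat \<Rightarrow> 'a" and c :: 'a and W :: nat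
  assumes "(1/2::real)^N \<le> e" "ell + N + m \<le> W" "ell \<ge> 1"
    and lim: "(\<lambda>n. real (card {i. i < n \<and> \<not> (\<forall>k<W. y (i + k) = c)}) / real n) \<longlonglongrightarrow> 0"
  shows "(\<lambda>n. RR (embed m y) n e ell) \<longlonglongrightarrow> 1"
proof (rule tendsto_sandwich)
  define \<delta> where "\<delta> n = real (card {i. i < n \<and> \<not> (\<forall>k<W. y (i + k) = c)}) / real n" for n
  show "\<forall>\<^sub>F n in sequentially. (max 0 (1 - real ell / real n - \<delta> n))^2 - 1 / real n \<le> RR (embed m y) n e ell"
    using eventually_ge_at_top[of 2]
  proof eventually_elim
    case (elim n)
    show ?case unfolding \<delta>_def using RR_lower_good[where y=y and c=c, OF assms(1,2) elim assms(3)]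
      by simp
  qed
  show "\<forall>\<^sub>F n in sequentially. RR (embed m y) n e ell \<le> 1"
    using eventually_ge_at_top[of 2] by eventually_elim (rule RR_le1)
  have "(\<lambda>n. (max 0 (1 - real ell / real n - \<delta> n))^2 - 1 / real n) \<longlonglongrightarrow> (max 0 (1 - 0 - 0))^2 - 0"
    using lim unfolding \<delta>_def[symmetric] by (intro tendsto_intros)
  then show "(\<lambda>n. (max 0 (1 - real ell / real n - \<delta> n))^2 - 1 / real n) \<longlonglongrightarrow> 1" by simp
  show "(\<lambda>n. 1::real) \<longlonglongrightarrow> 1" by simp
qed

lemma recurrence_limits:
  fixes y :: "nat \<Rightarrow> 'a" and c :: 'a and W :: nat
  assumes "(1/2::real)^N \<le> e" "ell + N + m \<le> W" "ell \<ge> 1"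
    and lim: "(\<lambda>n. real (card {i. i < n \<and> \<not> (\<forall>k<W. y (i + k) = c)}) / real n) \<longlonglongrightarrow> 0"
  shows "(\<lambda>n. corr_sum (embed m y) n e ell) \<longlonglongrightarrow> 1
    \<and> (\<lambda>n. RR (embed m y) n e ell) \<longlonglongrightarrow> 1
    \<and> (\<lambda>n. DET (embed m y) n e ell) \<longlonglongrightarrow> 1
    \<and> filterlim (\<lambda>n. avgL (embed m y) n e ell) at_top sequentially"
proof (intro conjI)
  define \<delta> where "\<delta> n = real (card {i. i < n \<and> \<not> (\<forall>k<W. y (i + k) = c)}) / real n" for n
  have lim': "\<delta> \<longlonglongrightarrow> 0" using lim unfolding \<delta>_def .
  show RR: "(\<lambda>n. RR (embed m y) n e ell) \<longlonglongrightarrow> 1" by (rule RR_tendsto[OF assms])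
  have W1: "1 + N + m \<le> W" using assms(2,3) by linarith
  have RR1: "(\<lambda>n. RR (embed m y) n e 1) \<longlonglongrightarrow> 1" by (rule RR_tendsto[OF assms(1) W1 _ lim]) simp
  show "(\<lambda>n. DET (embed m y) n e ell) \<longlonglongrightarrow> 1"
    unfolding DET_def using tendsto_divide[OF RR RR1] by simp
  show "(\<lambda>n. corr_sum (embed m y) n e ell) \<longlonglongrightarrow> 1"
  proof (rule tendsto_sandwich)
    show "\<forall>\<^sub>F n in sequentially. (1 - \<delta> n)^2 \<le> corr_sum (embed m y) n e ell"
      using eventually_ge_at_top[of 1]
    proof eventually_elim
      case (elim n)
      then have n0: "n > 0" by simp
      have "card {i. i < n \<and> (\<forall>k<W. y (i + k) = c)} + card {i. i < n \<and> \<not> (\<forall>k<W. y (i + k) = c)} = n"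
        by (rule card_good_bad)
      then have "real (card {i. i < n \<and> (\<forall>k<W. y (i + k) = c)}) / real n = 1 - \<delta> n"
        unfolding \<delta>_def using n0 by (simp add: field_simps flip: of_nat_add)
      then show ?case using corr_bounds(2)[where y=y and c=c, OF assms(1,2) n0] by simp
    qed
    show "\<forall>\<^sub>F n in sequentially. corr_sum (embed m y) n e ell \<le> 1"
      using eventually_ge_at_top[of 1] by eventually_elim (rule corr_bounds(1)[OF assms(1,2)], simp)
    show "(\<lambda>n. (1 - \<delta> n)^2) \<longlonglongrightarrow> 1" using tendsto_power[OF tendsto_diff[OF tendsto_const lim'], of 1 2] by simp
    show "(\<lambda>n. 1::real) \<longlonglongrightarrow> 1" by simp
  qed
  define U where "U n = 4 / real n + 4 * \<delta> n" for n
  have U0: "U \<longlonglongrightarrow> 0" unfolding U_def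
    using tendsto_add[OF lim_const_over_n[of "4::real"] tendsto_mult[OF tendsto_const[of "4::real"] lim']] by simp
  have Upos: "\<forall>\<^sub>F n in sequentially. 0 < 2 * U n"
    using eventually_ge_at_top[of 1]
  proof eventually_elim
    case (elim n)
    have "\<delta> n \<ge> 0" unfolding \<delta>_def by simp
    then show ?case unfolding U_def using elim by (simp add: add_pos_nonneg)
  qed
  have "filterlim (\<lambda>n. inverse (2 * U n)) at_top sequentially"
  proof (rule filterlim_inverse_at_top)
    show "(\<lambda>x. 2 * U x) \<longlonglongrightarrow> 0" using tendsto_mult[OF tendsto_const U0, of 2] by simp
    show "\<forall>\<^sub>F n in sequentially. 0 < 2 * U n" by (rule Upos)
  qed
  moreover have "\<forall>\<^sub>F n in sequentially. inverse (2 * U n) \<le> avgL (embed m y) n e ell"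
  proof -
    have "\<forall>\<^sub>F n in sequentially. RR (embed m y) n e ell > 1/2"
      using RR by (rule order_tendstoD) simp
    then show ?thesis using eventually_ge_at_top[of 2]
    proof eventually_elim
      case (elim n)
      have Lu: "Lam (embed m y) n e ell \<le> U n"
        using Lam_upper_good[where y=y and c=c, OF assms(1,2) elim(2) assms(3)] unfolding U_def \<delta>_def
        by (simp add: times_divide_eq_right)
      have "RR (embed m y) n e ell \<le> real n * Lam (embed m y) n e ell" by (rule Lam_RR[OF elim(2)])
      have Lp: "Lam (embed m y) n e ell > 0"
      proof (rule ccontr)
        assume "\<not> ?thesis"
        then have "real n * Lam (embed m y) n e ell \<le> 0" by (simp add: mult_nonneg_nonpos)
        then show False using elim(1) \<open>RR (embed m y) n e ell \<le> real n * Lam (embed m y) n e ell\<close> by linarith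
      qed
      have "inverse (2 * U n) = (1/2) / U n" by (simp add: inverse_eq_divide)
      also have "\<dots> \<le> (1/2) / Lam (embed m y) n e ell" using Lp Lu by (intro divide_left_mono) auto
      also have "\<dots> \<le> RR (embed m y) n e ell / Lam (embed m y) n e ell"
        using Lp elim(1) by (intro divide_right_mono) auto
      finally show ?case unfolding avgL_def .
    qed
  qed
  ultimately show "filterlim (\<lambda>n. avgL (embed m y) n e ell) at_top sequentially"
    by (rule filterlim_at_top_mono)
qed



lemma md: "(x::nat) mod (a * b) div a = (x div a) mod b"
    by (metis add.right_neutral div_mult_self4 mod_by_0 mod_div_trivial
    mod_mult2_eq mod_mult_self2_is_0)
lemma mod_pow_digit:
  fixes x q :: nat
  assumes "t < j" shows "x mod q ^ j div q ^ t mod q = x div q ^ t mod q"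
proof -
  obtain r where r: "j = t + Suc r" using less_imp_Suc_add[OF assms] by auto
  have "x mod q ^ j div q ^ t = (x div q ^ t) mod q ^ Suc r"
    unfolding r power_add by (rule md)
  moreover have "q dvd q ^ Suc r" by simp
  ultimately show ?thesis using mod_mod_cancel by metis
qed

lemma nth_concat_uniform:
  assumes "\<forall>x\<in>set w. length (f x) = q" "p < q * length w"
  shows "concat (map f w) ! p = f (w ! (p div q)) ! (p mod q)"
  using assms
proof (induction w arbitrary: p)
  case Nil then show ?case by simp
next
  case (Cons x w)
  have lx: "length (f x) = q" using Cons.prems by simp
  show ?case
  proof (cases "p < q")
    case True
    then show ?thesis using lx by (simp add: nth_append)
  next
    case False
    then have "p - q < q * length w" using Cons.prems by simp
    then have IH: "concat (map f w) ! (p - q) = f (w ! ((p - q) div q)) ! ((p - q) mod q)"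
      using Cons by simp
    have q0: "q > 0" using False Cons.prems by (cases q) auto
    have "p div q = Suc ((p - q) div q)" using False q0 by (simp add: le_div_geq)
    moreover have "(p - q) mod q = p mod q" using False by (simp add: le_mod_geq)
    ultimately show ?thesis using IH False lx
      by (simp add: nth_append nth_Cons') 
  qed
qed

lemma length_subst_word:
  assumes "\<forall>x. length (\<zeta> x) = q"
  shows "length (subst_word \<zeta> w) = q * length w"
  unfolding subst_word_def using assms by (induction w) auto

lemma length_iter:
  assumes "\<forall>x. length (\<zeta> x) = q"
  shows "length ((subst_word \<zeta> ^^ k) [a]) = q ^ k"
  by (induction k) (auto simp: length_subst_word[OF assms])

lemma set_subst_word: "set (subst_word \<zeta> w) = (\<Union>x\<in>set w. set (\<zeta> x))"
  unfolding subst_word_def by simp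

lemma const_iter:
  assumes "\<forall>b. \<exists>b'. set (\<zeta> b) \<subseteq> {b'}"
  shows "\<exists>b. set ((subst_word \<zeta> ^^ k) [a]) \<subseteq> {b}"
proof (induction k)
  case 0 then show ?case by auto
next
  case (Suc k)
  then obtain b where b: "set ((subst_word \<zeta> ^^ k) [a]) \<subseteq> {b}" by blast
  obtain b' where "set (\<zeta> b) \<subseteq> {b'}" using assms by blast
  then have "set ((subst_word \<zeta> ^^ Suc k) [a]) \<subseteq> {b'}" using b by (auto simp: set_subst_word)
  then show ?case by blast
qed

lemma digits_iter:
  assumes len: "\<forall>x. length (\<zeta> x) = q" and cc: "set (\<zeta> c) \<subseteq> {c}"
  defines "D \<equiv> {d. d < q \<and> \<zeta> (\<not> c) ! d \<noteq> c}"
  shows "\<forall>p < q ^ k. (subst_word \<zeta> ^^ k) [a] ! p \<noteq> c \<longrightarrow> (\<forall>t<k. p div q ^ t mod q \<in> D)"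
proof (induction k)
  case 0 then show ?case by simp
next
  case (Suc k)
  show ?case
  proof (intro allI impI)
    fix p t assume p: "p < q ^ Suc k" and ne: "(subst_word \<zeta> ^^ Suc k) [a] ! p \<noteq> c" and t: "t < Suc k"
    define w where "w = (subst_word \<zeta> ^^ k) [a]"
    have lw: "length w = q ^ k" unfolding w_def by (rule length_iter[OF len])
    have q0: "q > 0" using p by (cases q) auto
    have eq: "(subst_word \<zeta> ^^ Suc k) [a] ! p = \<zeta> (w ! (p div q)) ! (p mod q)"
    proof -
      have "(subst_word \<zeta> ^^ Suc k) [a] = concat (map \<zeta> w)"
        by (simp add: w_def subst_word_def)
      moreover have "concat (map \<zeta> w) ! p = \<zeta> (w ! (p div q)) ! (p mod q)"
        by (rule nth_concat_uniform) (use len p lw in \<open>auto simp: mult.commute\<close>)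
      ultimately show ?thesis by simp
    qed
    have pq: "p div q < q ^ k" using p q0 by (simp add: div_less_iff_less_mult mult.commute)
    have pm: "p mod q < q" using q0 by simp
    have wc: "w ! (p div q) \<noteq> c"
    proof
      assume "w ! (p div q) = c"
      moreover have "\<zeta> c ! (p mod q) \<in> set (\<zeta> c)" using len pm by (intro nth_mem) simp
      ultimately have "\<zeta> (w ! (p div q)) ! (p mod q) = c" using cc by auto
      then show False using ne eq by simp
    qed
    then have wnc: "w ! (p div q) = (\<not> c)" by auto
    have digit0: "p mod q \<in> D" unfolding D_def using ne eq wnc pm by simp
    have IH: "\<forall>t<k. p div q div q ^ t mod q \<in> D" using Suc.IH pq wc unfolding w_def by blast
    show "p div q ^ t mod q \<in> D"
    proof (cases t)
      case 0 then show ?thesis using digit0 by simp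
    next
      case (Suc t')
      then have "t' < k" using t by simp
      then have "p div q div q ^ t' mod q \<in> D" using IH by blast
      then show ?thesis unfolding Suc by (simp add: div_mult2_eq)
    qed
  qed
qed



lemma div_add_le: "(0::nat) < Q \<Longrightarrow> (s + n) div Q \<le> s div Q + n div Q + 1"
proof -
  assume Q: "0 < Q"
  have "(s mod Q + n mod Q) div Q \<le> 1"
  proof -
    have "s mod Q < Q" "n mod Q < Q" using Q by simp_all
    then have "s mod Q + n mod Q < 2 * Q" by linarith
    then have "(s mod Q + n mod Q) div Q < 2" by (simp only: div_less_iff_less_mult[OF Q])
    then show ?thesis by linarith
  qed
  then show ?thesis by (subst div_add1_eq) linarith
qed

definition digS :: "nat \<Rightarrow> nat set \<Rightarrow> nat \<Rightarrow> nat set" where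
  "digS q D j = {x. x < q ^ j \<and> (\<forall>t<j. x div q ^ t mod q \<in> D)}"

lemma finite_digS[simp]: "finite (digS q D j)"
  unfolding digS_def by auto

lemma card_digS:
  assumes "finite D" shows "card (digS q D j) \<le> card D ^ j"
proof (induction j)
  case 0
  have "digS q D 0 \<subseteq> {0}" unfolding digS_def by auto
  then have "card (digS q D 0) \<le> card {0::nat}" by (intro card_mono) auto
  then show ?case by simp
next
  case (Suc j)
  have "digS q D (Suc j) \<subseteq> (\<lambda>(u, d). u * q + d) ` (digS q D j \<times> D)"
  proof (rule subsetI)
    fix x assume x: "x \<in> digS q D (Suc j)"
    have q0: "q > 0" using x unfolding digS_def by (cases q) auto
    have "x div q < q ^ j" using x q0 unfolding digS_def
      by (simp add: div_less_iff_less_mult mult.commute)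
    moreover have "\<forall>t<j. x div q div q ^ t mod q \<in> D"
    proof (intro allI impI)
      fix t assume "t < j"
      then have "x div q ^ Suc t mod q \<in> D" using x unfolding digS_def by blast
      then show "x div q div q ^ t mod q \<in> D" by (simp add: div_mult2_eq)
    qed
    ultimately have "x div q \<in> digS q D j" unfolding digS_def by blast
    moreover have "x mod q \<in> D" using x unfolding digS_def by (auto dest: spec[of _ 0])
    moreover have "x = x div q * q + x mod q" by simp
    ultimately show "x \<in> (\<lambda>(u, d). u * q + d) ` (digS q D j \<times> D)" by force
  qed
  then have "card (digS q D (Suc j)) \<le> card ((\<lambda>(u, d). u * q + d) ` (digS q D j \<times> D))"
    using assms by (intro card_mono) auto
  also have "\<dots> \<le> card (digS q D j \<times> D)" by (rule card_image_le) (use assms in auto)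
  also have "\<dots> = card (digS q D j) * card D" by (simp add: card_cartesian_product)
  also have "\<dots> \<le> card D ^ j * card D" using Suc.IH by (intro mult_right_mono) auto
  finally show ?case by (simp add: mult.commute)
qed

lemma factor_of_shift:
  assumes "y \<in> subst_shift \<zeta>"
  obtains a k s where "k \<ge> 1" "s + n \<le> length ((subst_word \<zeta> ^^ k) [a])"
    "\<And>i. i < n \<Longrightarrow> y i = (subst_word \<zeta> ^^ k) [a] ! (s + i)"
proof -
  have "map y [0..<n] \<in> subst_lang \<zeta>" using assms unfolding subst_shift_def by blast
  then obtain a k ps ss where k: "k \<ge> 1" and w: "(subst_word \<zeta> ^^ k) [a] = ps @ map y [0..<n] @ ss"
    unfolding subst_lang_def is_factor_def by blast
  show ?thesis
  proof (rule that[OF k])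
    show "length ps + n \<le> length ((subst_word \<zeta> ^^ k) [a])" unfolding w by simp
    fix i assume "i < n"
    then show "y i = (subst_word \<zeta> ^^ k) [a] ! (length ps + i)" unfolding w
      by (simp add: nth_append)
  qed
qed

lemma count_bad:
  assumes len: "\<forall>x. length (\<zeta> x) = q" and q2: "q \<ge> 2" and cc: "set (\<zeta> c) \<subseteq> {c}"
    and y: "y \<in> subst_shift \<zeta>" and nj: "q ^ j \<le> n"
  defines "D \<equiv> {d. d < q \<and> \<zeta> (\<not> c) ! d \<noteq> c}"
  shows "card {i. i < n \<and> y i \<noteq> c} \<le> (n div q ^ j + 2) * card D ^ j"
proof -
  obtain a k s where k: "k \<ge> 1" and sn: "s + n \<le> length ((subst_word \<zeta> ^^ k) [a])"
    and yi: "\<And>i. i < n \<Longrightarrow> y i = (subst_word \<zeta> ^^ k) [a] ! (s + i)"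
    using factor_of_shift[OF y] by metis
  define w where "w = (subst_word \<zeta> ^^ k) [a]"
  have lw: "length w = q ^ k" unfolding w_def by (rule length_iter[OF len])
  have "q ^ j \<le> q ^ k" using nj sn lw unfolding w_def by linarith
  then have jk: "j \<le> k" using q2 by (simp add: power_increasing_iff)
  define Q where "Q = q ^ j"
  have Q0: "Q > 0" unfolding Q_def using q2 by simp
  define E where "E = {i. i < n \<and> y i \<noteq> c}"
  define f where "f i = ((s + i) div Q, (s + i) mod Q)" for i
  have dig: "\<forall>p < q ^ k. w ! p \<noteq> c \<longrightarrow> (\<forall>t<k. p div q ^ t mod q \<in> D)"
    unfolding w_def D_def by (rule digits_iter[OF len cc])
  have "inj_on f E"
  proof (rule inj_onI)
    fix i i' assume "f i = f i'"
    then have "(s + i) div Q * Q + (s + i) mod Q = (s + i') div Q * Q + (s + i') mod Q"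
      unfolding f_def by simp
    then show "i = i'" by simp
  qed
  moreover have "f ` E \<subseteq> {s div Q .. (s + n) div Q} \<times> digS q D j"
  proof (rule subsetI)
    fix x assume "x \<in> f ` E"
    then obtain i where i: "i < n" "y i \<noteq> c" and x: "x = f i" unfolding E_def by blast
    have "w ! (s + i) \<noteq> c" using i yi unfolding w_def by simp
    moreover have "s + i < q ^ k" using i sn lw unfolding w_def by linarith
    ultimately have d: "\<forall>t<k. (s + i) div q ^ t mod q \<in> D" using dig by blast
    have "(s + i) mod Q \<in> digS q D j" unfolding digS_def
    proof (intro CollectI conjI allI impI)
      show "(s + i) mod Q < q ^ j" using Q0 unfolding Q_def by simp
      fix t assume "t < j"
      then have "(s + i) div q ^ t mod q \<in> D" using d jk by simp
      then show "(s + i) mod Q div q ^ t mod q \<in> D" unfolding Q_def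
        using mod_pow_digit[OF \<open>t < j\<close>] by simp
    qed
    moreover have "s div Q \<le> (s + i) div Q" "(s + i) div Q \<le> (s + n) div Q"
      using i by (simp_all add: div_le_mono)
    ultimately show "x \<in> {s div Q .. (s + n) div Q} \<times> digS q D j" unfolding x f_def by simp
  qed
  ultimately have "card E \<le> card ({s div Q .. (s + n) div Q} \<times> digS q D j)"
    by (metis card_image card_mono finite_SigmaI finite_atLeastAtMost finite_digS)
  also have "\<dots> = card {s div Q .. (s + n) div Q} * card (digS q D j)"
    by (simp add: card_cartesian_product)
  also have "\<dots> \<le> (n div Q + 2) * card D ^ j"
  proof (rule mult_mono)
    have "(s + n) div Q \<le> s div Q + n div Q + 1" by (rule div_add_le[OF Q0])
    then show "card {s div Q .. (s + n) div Q} \<le> n div Q + 2" by simp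
    show "card (digS q D j) \<le> card D ^ j" by (rule card_digS) (simp add: D_def)
  qed auto
  finally show ?thesis unfolding E_def Q_def .
qed



lemma bad_window:
  fixes y :: "nat \<Rightarrow> 'a"
  assumes lim: "(\<lambda>n. real (card {i. i < n \<and> y i \<noteq> c}) / real n) \<longlonglongrightarrow> 0"
  shows "(\<lambda>n. real (card {i. i < n \<and> \<not> (\<forall>k<W. y (i + k) = c)}) / real n) \<longlonglongrightarrow> 0"
proof (rule tendsto_sandwich)
  define E where "E n = card {i. i < n \<and> y i \<noteq> c}" for n
  have bnd: "card {i. i < n \<and> \<not> (\<forall>k<W. y (i + k) = c)} \<le> W * (E n + W)" for n
  proof -
    have sub: "{i. i < n \<and> \<not> (\<forall>k<W. y (i + k) = c)} \<subseteq> (\<Union>k\<in>{..<W}. {i. i < n \<and> y (i + k) \<noteq> c})"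
      by auto
    have each: "card {i. i < n \<and> y (i + k) \<noteq> c} \<le> E n + W" if "k < W" for k
    proof -
      have "(\<lambda>i. i + k) ` {i. i < n \<and> y (i + k) \<noteq> c} \<subseteq> {p. p < n \<and> y p \<noteq> c} \<union> {n..<n + W}"
        using that by auto
      then have "card ((\<lambda>i. i + k) ` {i. i < n \<and> y (i + k) \<noteq> c}) \<le> card ({p. p < n \<and> y p \<noteq> c} \<union> {n..<n + W})"
        by (intro card_mono) auto
      also have "\<dots> \<le> card {p. p < n \<and> y p \<noteq> c} + card {n..<n + W}" by (rule card_Un_le)
      finally show ?thesis unfolding E_def by (simp add: card_image)
    qed
    have "card {i. i < n \<and> \<not> (\<forall>k<W. y (i + k) = c)} \<le> card (\<Union>k\<in>{..<W}. {i. i < n \<and> y (i + k) \<noteq> c})"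
      using sub by (intro card_mono) auto
    also have "\<dots> \<le> (\<Sum>k\<in>{..<W}. card {i. i < n \<and> y (i + k) \<noteq> c})" by (rule card_UN_le) simp
    also have "\<dots> \<le> (\<Sum>k\<in>{..<W}. E n + W)" by (intro sum_mono each) simp
    finally show ?thesis by simp
  qed
  show "\<forall>\<^sub>F n in sequentially. 0 \<le> real (card {i. i < n \<and> \<not> (\<forall>k<W. y (i + k) = c)}) / real n"
    by simp
  show "\<forall>\<^sub>F n in sequentially. real (card {i. i < n \<and> \<not> (\<forall>k<W. y (i + k) = c)}) / real n
      \<le> real W * (real (E n) / real n) + real W * real W / real n"
  proof (rule always_eventually, rule allI)
    fix n
    have "real (card {i. i < n \<and> \<not> (\<forall>k<W. y (i + k) = c)}) \<le> real W * real (E n) + real W * real W"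
      using bnd[of n] by (simp only: of_nat_le_iff flip: of_nat_mult of_nat_add distrib_left)
    then have "real (card {i. i < n \<and> \<not> (\<forall>k<W. y (i + k) = c)}) / real n \<le> (real W * real (E n) + real W * real W) / real n"
      by (rule divide_right_mono) simp
    then show "real (card {i. i < n \<and> \<not> (\<forall>k<W. y (i + k) = c)}) / real n
      \<le> real W * (real (E n) / real n) + real W * real W / real n"
      by (simp add: add_divide_distrib)
  qed
  show "(\<lambda>n. 0::real) \<longlonglongrightarrow> 0" by simp
  have "(\<lambda>n. real W * (real (E n) / real n) + real W * real W / real n) \<longlonglongrightarrow> real W * 0 + 0"
    using lim unfolding E_def by (intro tendsto_add tendsto_mult tendsto_const lim_const_over_n)
  then show "(\<lambda>n. real W * (real (E n) / real n) + real W * real W / real n) \<longlonglongrightarrow> 0" by simp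
qed



lemma density_zero:
  assumes len: "\<forall>x. length (\<zeta> x) = q" and q2: "q \<ge> 2" and cc: "set (\<zeta> c) \<subseteq> {c}"
    and y: "y \<in> subst_shift \<zeta>"
    and dq: "card {d. d < q \<and> \<zeta> (\<not> c) ! d \<noteq> c} < q"
  shows "(\<lambda>n. real (card {i. i < n \<and> y i \<noteq> c}) / real n) \<longlonglongrightarrow> 0"
proof (rule order_tendstoI)
  fix a :: real assume "a < 0"
  show "\<forall>\<^sub>F n in sequentially. a < real (card {i. i < n \<and> y i \<noteq> c}) / real n"
  proof (rule always_eventually, rule allI)
    fix n
    have "0 \<le> real (card {i. i < n \<and> y i \<noteq> c}) / real n" by simp
    then show "a < real (card {i. i < n \<and> y i \<noteq> c}) / real n" using \<open>a < 0\<close> by linarith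
  qed
next
  fix r :: real assume r: "0 < r"
  define D where "D = {d. d < q \<and> \<zeta> (\<not> c) ! d \<noteq> c}"
  define d where "d = card D"
  have dq': "d < q" using dq unfolding d_def D_def .
  define \<rho> where "\<rho> = real d / real q"
  have rho1: "\<rho> < 1" unfolding \<rho>_def using dq' q2 by simp
  obtain j where j: "\<rho> ^ j < r / 2" using real_arch_pow_inv[of "r/2" \<rho>] r rho1 by auto
  have ev1: "\<forall>\<^sub>F n in sequentially. 2 * real d ^ j / real n < r / 2"
    using lim_const_over_n[of "2 * real d ^ j"] r by (intro order_tendstoD(2)) auto
  show "\<forall>\<^sub>F n in sequentially. real (card {i. i < n \<and> y i \<noteq> c}) / real n < r"
    using ev1 eventually_ge_at_top[of "q ^ j"] eventually_ge_at_top[of 1]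
  proof eventually_elim
    case (elim n)
    define Q where "Q = q ^ j"
    have Q0: "real Q > 0" unfolding Q_def using q2 by simp
    have n0: "real n > 0" using elim(3) by simp
    have cnt: "card {i. i < n \<and> y i \<noteq> c} \<le> (n div Q + 2) * d ^ j"
      unfolding Q_def d_def D_def by (rule count_bad[OF len q2 cc y elim(2)])
    have "n div Q * Q \<le> n" by (metis div_mult_mod_eq le_add1)
    then have "real (n div Q) * real Q \<le> real n" by (metis of_nat_le_iff of_nat_mult)
    then have dQ: "real (n div Q) \<le> real n / real Q" using Q0 by (simp add: pos_le_divide_eq)
    have "real (card {i. i < n \<and> y i \<noteq> c}) \<le> real ((n div Q + 2) * d ^ j)"
      using cnt by (simp only: of_nat_le_iff)
    also have "\<dots> = (real (n div Q) + 2) * real d ^ j" by (simp add: algebra_simps)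
    also have "\<dots> \<le> (real n / real Q + 2) * real d ^ j" using dQ by (intro mult_right_mono) auto
    finally have "real (card {i. i < n \<and> y i \<noteq> c}) / real n \<le> (real n / real Q + 2) * real d ^ j / real n"
      by (rule divide_right_mono) simp
    also have "\<dots> = real d ^ j / real Q + 2 * real d ^ j / real n"
      using n0 Q0 by (simp add: field_simps)
    also have "\<dots> = \<rho> ^ j + 2 * real d ^ j / real n"
      unfolding \<rho>_def Q_def by (simp add: power_divide)
    also have "\<dots> < r" using j elim(1) by linarith
    finally show ?case .
  qed
qed

lemma nonprim_cases:
  assumes "\<not> primitive \<zeta>"
  shows "(\<forall>b. \<exists>b'. set (\<zeta> b) \<subseteq> {b'}) \<or> (\<exists>c. set (\<zeta> c) \<subseteq> {c})"
proof (rule ccontr)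
  assume "\<not> ?thesis"
  then have n1: "\<not> (\<forall>b. \<exists>b'. set (\<zeta> b) \<subseteq> {b'})" and nc: "\<forall>c. \<not> set (\<zeta> c) \<subseteq> {c}"
    by simp_all
  from n1 obtain b0 where b0: "\<forall>b'. \<not> set (\<zeta> b0) \<subseteq> {b'}" by blast
  have both: "b \<in> set (\<zeta> b0)" for b
  proof (rule ccontr)
    assume "b \<notin> set (\<zeta> b0)"
    then have "x = (\<not> b)" if "x \<in> set (\<zeta> b0)" for x using that by (cases x; cases b) auto
    then have "set (\<zeta> b0) \<subseteq> {\<not> b}" by blast
    then show False using b0 by blast
  qed
  have other: "(\<not> c) \<in> set (\<zeta> c)" for c
  proof (rule ccontr)
    assume "(\<not> c) \<notin> set (\<zeta> c)"
    then have "x = c" if "x \<in> set (\<zeta> c)" for x using that by (cases x; cases c) auto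
    then have "set (\<zeta> c) \<subseteq> {c}" by blast
    then show False using nc by blast
  qed
  have b0a: "b0 \<in> set (\<zeta> a)" for a
  proof (cases "a = b0")
    case True then show ?thesis using both by simp
  next
    case False then have "b0 = (\<not> a)" by auto
    then show ?thesis using other[of a] by simp
  qed
  have "b \<in> set ((subst_word \<zeta> ^^ 2) [a])" for a b
  proof -
    have "(subst_word \<zeta> ^^ 2) [a] = subst_word \<zeta> (subst_word \<zeta> [a])" by (simp add: numeral_2_eq_2)
    moreover have "set (subst_word \<zeta> (subst_word \<zeta> [a])) = (\<Union>x\<in>set (\<zeta> a). set (\<zeta> x))"
      by (simp add: set_subst_word)
    ultimately show ?thesis using b0a[of a] both[of b] by auto
  qed
  then have "\<forall>a b. b \<in> set ((subst_word \<zeta> ^^ 2) [a])" by blast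
  then have "primitive \<zeta>" unfolding primitive_def by (intro exI[of _ 2]) auto
  then show False using assms by simp
qed

lemma const_case:
  assumes "\<forall>b. \<exists>b'. set (\<zeta> b) \<subseteq> {b'}" and y: "y \<in> subst_shift \<zeta>"
  shows "y i = y 0"
proof -
  obtain a k s where sn: "s + Suc i \<le> length ((subst_word \<zeta> ^^ k) [a])"
    and yi: "\<And>i'. i' < Suc i \<Longrightarrow> y i' = (subst_word \<zeta> ^^ k) [a] ! (s + i')"
    using factor_of_shift[OF y, of "Suc i"] by metis
  obtain b where b: "set ((subst_word \<zeta> ^^ k) [a]) \<subseteq> {b}" using const_iter[OF assms(1)] by blast
  have "(subst_word \<zeta> ^^ k) [a] ! (s + i) \<in> set ((subst_word \<zeta> ^^ k) [a])" using sn by (intro nth_mem) simp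
  moreover have "(subst_word \<zeta> ^^ k) [a] ! (s + 0) \<in> set ((subst_word \<zeta> ^^ k) [a])" using sn by (intro nth_mem) simp
  ultimately show ?thesis using yi[of i] yi[of 0] b by auto
qed

lemma density_exists:
  assumes len: "\<forall>x. length (\<zeta> x) = q" and q2: "q \<ge> 2" and np: "\<not> primitive \<zeta>"
    and y: "y \<in> subst_shift \<zeta>"
  shows "\<exists>c. (\<lambda>n. real (card {i. i < n \<and> y i \<noteq> c}) / real n) \<longlonglongrightarrow> 0"
proof -
  have constc: ?thesis if "\<forall>b. \<exists>b'. set (\<zeta> b) \<subseteq> {b'}"
  proof -
    have e: "{i. i < n \<and> y i \<noteq> y 0} = {}" for n using const_case[OF that y] by auto
    show ?thesis by (intro exI[of _ "y 0"]) (simp only: e card.empty of_nat_0 div_0 tendsto_const)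
  qed
  show ?thesis
  proof (cases "\<forall>b. \<exists>b'. set (\<zeta> b) \<subseteq> {b'}")
    case True then show ?thesis by (rule constc)
  next
    case False
    then obtain c where cc: "set (\<zeta> c) \<subseteq> {c}" using nonprim_cases[OF np] by blast
    define D where "D = {d. d < q \<and> \<zeta> (\<not> c) ! d \<noteq> c}"
    show ?thesis
    proof (cases "D = {..<q}")
      case True
      have "set (\<zeta> (\<not> c)) \<subseteq> {\<not> c}"
      proof
        fix x assume "x \<in> set (\<zeta> (\<not> c))"
        then obtain d where "d < length (\<zeta> (\<not> c))" "x = \<zeta> (\<not> c) ! d" by (metis in_set_conv_nth)
        then have "d \<in> D" "x = \<zeta> (\<not> c) ! d" using True len by auto
        then show "x \<in> {\<not> c}" unfolding D_def by auto
      qed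
      then have "\<forall>b. \<exists>b'. set (\<zeta> b) \<subseteq> {b'}"
      proof (intro allI)
        fix b
        assume nc: "set (\<zeta> (\<not> c)) \<subseteq> {\<not> c}"
        show "\<exists>b'. set (\<zeta> b) \<subseteq> {b'}"
        proof (cases "b = c")
          case True then show ?thesis using cc by blast
        next
          case False then have "b = (\<not> c)" by auto
          then show ?thesis using nc by blast
        qed
      qed
      then show ?thesis by (rule constc)
    next
      case False
      have "D \<subset> {..<q}" using False unfolding D_def by auto
      then have "card D < card {..<q}" by (intro psubset_card_mono) auto
      then have "card D < q" by simp
      then have "(\<lambda>n. real (card {i. i < n \<and> y i \<noteq> c}) / real n) \<longlonglongrightarrow> 0"
        unfolding D_def by (rule density_zero[OF len q2 cc y])
      then show ?thesis by (rule exI)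
    qed
  qed
qed


theorem theorem1p2:
  fixes \<zeta> :: "bool \<Rightarrow> bool list" and q :: nat and y :: "nat \<Rightarrow> bool"
    and m ell :: nat and \<epsilon> :: real
  assumes "q \<ge> 2" and "length (\<zeta> False) = q" and "length (\<zeta> True) = q"
    and "\<not> primitive \<zeta>"
    and "y \<in> subst_shift \<zeta>"
    and "m \<ge> 1" and "ell \<ge> 1" and "\<epsilon> > 0"
  shows "(\<lambda>n. corr_sum (embed m y) n \<epsilon> ell) \<longlonglongrightarrow> 1
    \<and> (\<lambda>n. RR (embed m y) n \<epsilon> ell) \<longlonglongrightarrow> 1
    \<and> (\<lambda>n. DET (embed m y) n \<epsilon> ell) \<longlonglongrightarrow> 1
    \<and> filterlim (\<lambda>n. avgL (embed m y) n \<epsilon> ell) at_top sequentially"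
proof -
  have len: "\<forall>x. length (\<zeta> x) = q"
  proof
    fix x show "length (\<zeta> x) = q" using assms(2,3) by (cases x) auto
  qed
  obtain c where lim: "(\<lambda>n. real (card {i. i < n \<and> y i \<noteq> c}) / real n) \<longlonglongrightarrow> 0"
    using density_exists[OF len assms(1) assms(4) assms(5)] by blast
  obtain N where N: "(1/2::real) ^ N < \<epsilon>" using real_arch_pow_inv[of \<epsilon> "1/2"] assms(8) by auto
  show ?thesis
    by (rule recurrence_limits[OF less_imp_le[OF N] le_refl assms(7) bad_window[OF lim]])
qed

end
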